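(* Let $(P,\epsilon)$ be a labeled poset and let $n$ be a non-negative integer such that $\Omega(P,\epsilon;n)\ne0$. If $\Omega(P,-\epsilon;n+r(\epsilon))=\Omega(P,\epsilon;n)$, then $\epsilon$ satisfies the $\lambda$-chain condition.
   Context: $P$ is a finite poset with $p$ elements, $\omega:P\to\{1,\dots,p\}$ a bijection; write $x\prec y$ if $y$ covers $x$, and $\epsilon(x,y)=1$ if $\omega(x)<\omega(y)$, $-1$ otherwise; $-\epsilon$ is defined by $(-\epsilon)(x,y)=-\epsilon(x,y)$ (induced by the labeling $p+1-\omega$). A $(P,\epsilon)$-partition is an order-reversing map $\sigma:P\to\{1,2,\dots\}$ with $\sigma(x)>\sigma(y)$ whenever $x\prec y$ and $\epsilon(x,y)=-1$; $\Omega(P,\epsilon;n)$ is the number of $(P,\epsilon)$-partitions with largest part at most $n$. $r(\epsilon)=\max\sum_{i=1}^\ell\epsilon(x_{i-1},x_i)$ over all maximal chains $x_0\prec\cdots\prec x_\ell$ of $P$. $\epsilon$ satisfies the $\lambda$-chain condition if every $x\in P$ lies on some maximal chain $x_0\prec\cdots\prec x_\ell$ with $\sum_{i=1}^\ell\epsilon(x_{i-1},x_i)=r(\epsilon)$. *)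

theory Defs
  imports Main "HOL-Library.FuncSet"
begin

text \<open>A finite poset is a carrier P with an order relation R (pairs (x,y) meaning x \<le> y),
  satisfying partial_order_on P R. A labeling is a bijection omega : P \<rightarrow> {1..card P}.\<close>

definition covers :: "'a set \<Rightarrow> ('a \<times> 'a) set \<Rightarrow> 'a \<Rightarrow> 'a \<Rightarrow> bool" where
  "covers P R x y \<longleftrightarrow> x \<in> P \<and> y \<in> P \<and> (x, y) \<in> R \<and> x \<noteq> y \<and>
     \<not> (\<exists>z\<in>P. (x, z) \<in> R \<and> (z, y) \<in> R \<and> z \<noteq> x \<and> z \<noteq> y)"

definition eps_of :: "('a \<Rightarrow> nat) \<Rightarrow> 'a \<Rightarrow> 'a \<Rightarrow> int" where
  "eps_of \<omega> x y = (if \<omega> x < \<omega> y then 1 else -1)"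

definition PE_partitions :: "'a set \<Rightarrow> ('a \<times> 'a) set \<Rightarrow> ('a \<Rightarrow> 'a \<Rightarrow> int) \<Rightarrow> int \<Rightarrow> ('a \<Rightarrow> int) set" where
  "PE_partitions P R e n = {\<sigma> \<in> P \<rightarrow>\<^sub>E {1..n}.
      (\<forall>x\<in>P. \<forall>y\<in>P. (x, y) \<in> R \<longrightarrow> \<sigma> y \<le> \<sigma> x) \<and>
      (\<forall>x y. covers P R x y \<and> e x y = -1 \<longrightarrow> \<sigma> y < \<sigma> x)}"

definition Omega :: "'a set \<Rightarrow> ('a \<times> 'a) set \<Rightarrow> ('a \<Rightarrow> 'a \<Rightarrow> int) \<Rightarrow> int \<Rightarrow> nat" where
  "Omega P R e n = card (PE_partitions P R e n)"

definition maximal_chain :: "'a set \<Rightarrow> ('a \<times> 'a) set \<Rightarrow> 'a list \<Rightarrow> bool" where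
  "maximal_chain P R xs \<longleftrightarrow> xs \<noteq> [] \<and>
     (\<forall>i. Suc i < length xs \<longrightarrow> covers P R (xs ! i) (xs ! Suc i)) \<and>
     hd xs \<in> P \<and> last xs \<in> P \<and>
     \<not> (\<exists>z\<in>P. (z, hd xs) \<in> R \<and> z \<noteq> hd xs) \<and>
     \<not> (\<exists>z\<in>P. (last xs, z) \<in> R \<and> z \<noteq> last xs)"

definition chain_sum :: "('a \<Rightarrow> 'a \<Rightarrow> int) \<Rightarrow> 'a list \<Rightarrow> int" where
  "chain_sum e xs = (\<Sum>i<length xs - 1. e (xs ! i) (xs ! Suc i))"

definition r_of :: "'a set \<Rightarrow> ('a \<times> 'a) set \<Rightarrow> ('a \<Rightarrow> 'a \<Rightarrow> int) \<Rightarrow> int" where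
  "r_of P R e = Max {chain_sum e xs | xs. maximal_chain P R xs}"

definition lambda_chain_condition :: "'a set \<Rightarrow> ('a \<times> 'a) set \<Rightarrow> ('a \<Rightarrow> 'a \<Rightarrow> int) \<Rightarrow> bool" where
  "lambda_chain_condition P R e \<longleftrightarrow>
     (\<forall>x\<in>P. \<exists>xs. maximal_chain P R xs \<and> x \<in> set xs \<and> chain_sum e xs = r_of P R e)"

end

theory Submission
  imports Defs
begin

fun pathr :: "'a set \<Rightarrow> ('a \<times> 'a) set \<Rightarrow> 'a list \<Rightarrow> bool" where
  "pathr P R [] = False"
| "pathr P R [x] = (x \<in> P)"
| "pathr P R (x # y # zs) = (covers P R x y \<and> pathr P R (y # zs))"

fun csum :: "('a \<Rightarrow> 'a \<Rightarrow> int) \<Rightarrow> 'a list \<Rightarrow> int" where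
  "csum e (x # y # zs) = e x y + csum e (y # zs)"
| "csum e _ = 0"

fun ascn :: "('a \<Rightarrow> 'a \<Rightarrow> int) \<Rightarrow> 'a list \<Rightarrow> int" where
  "ascn e (x # y # zs) = (if e x y = 1 then 1 else 0) + ascn e (y # zs)"
| "ascn e _ = 0"

lemma ascn_nonneg: "ascn e xs \<ge> 0"
  by (induction e xs rule: ascn.induct) auto

lemma chain_sum_csum: "chain_sum e xs = csum e xs"
proof (induction e xs rule: csum.induct)
  case (1 e x y zs)
  have "chain_sum e (x#y#zs) = (\<Sum>i<Suc (length zs). e ((x#y#zs)!i) ((x#y#zs)!Suc i))"
    by (simp add: chain_sum_def)
  also have "\<dots> = e x y + (\<Sum>i<length zs. e ((y#zs)!i) ((y#zs)!Suc i))"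
    by (subst sum.lessThan_Suc_shift) simp
  also have "\<dots> = e x y + chain_sum e (y#zs)" by (simp add: chain_sum_def)
  finally show ?case using 1 by simp
qed (auto simp: chain_sum_def)

lemma pathr_iff:
  "pathr P R xs \<longleftrightarrow> xs \<noteq> [] \<and> (\<forall>i. Suc i < length xs \<longrightarrow> covers P R (xs!i) (xs!Suc i)) \<and> hd xs \<in> P"
proof (induction P R xs rule: pathr.induct)
  case (3 P R x y zs)
  have "(\<forall>i. Suc i < length (x#y#zs) \<longrightarrow> covers P R ((x#y#zs)!i) ((x#y#zs)!Suc i)) \<longleftrightarrow>
        covers P R x y \<and> (\<forall>i. Suc i < length (y#zs) \<longrightarrow> covers P R ((y#zs)!i) ((y#zs)!Suc i))"
    (is "?L \<longleftrightarrow> ?R")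
  proof
    assume L: ?L
    show ?R
    proof
      show "covers P R x y" using spec[OF L, of 0] by simp
      show "\<forall>i. Suc i < length (y#zs) \<longrightarrow> covers P R ((y#zs)!i) ((y#zs)!Suc i)"
      proof (intro allI impI)
        fix i assume "Suc i < length (y#zs)"
        then show "covers P R ((y#zs)!i) ((y#zs)!Suc i)" using spec[OF L, of "Suc i"] by simp
      qed
    qed
  next
    assume R: ?R
    show ?L
    proof (intro allI impI)
      fix i assume "Suc i < length (x#y#zs)"
      then show "covers P R ((x#y#zs)!i) ((x#y#zs)!Suc i)"
        using R by (cases i) auto
    qed
  qed
  moreover have "covers P R x y \<Longrightarrow> x \<in> P \<and> y \<in> P" by (simp add: covers_def)
  ultimately show ?case using 3 by auto
qed auto

definition minel :: "'a set \<Rightarrow> ('a \<times> 'a) set \<Rightarrow> 'a \<Rightarrow> bool" where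
  "minel P R x \<longleftrightarrow> x \<in> P \<and> \<not> (\<exists>z\<in>P. (z, x) \<in> R \<and> z \<noteq> x)"
definition maxel :: "'a set \<Rightarrow> ('a \<times> 'a) set \<Rightarrow> 'a \<Rightarrow> bool" where
  "maxel P R x \<longleftrightarrow> x \<in> P \<and> \<not> (\<exists>z\<in>P. (x, z) \<in> R \<and> z \<noteq> x)"

lemma maximal_chain_iff:
  "maximal_chain P R xs \<longleftrightarrow> pathr P R xs \<and> minel P R (hd xs) \<and> maxel P R (last xs)"
  unfolding maximal_chain_def minel_def maxel_def pathr_iff by auto

lemma path_app:
  assumes "pathr P R xs" "pathr P R ys" "last xs = hd ys"
  shows "pathr P R (xs @ tl ys) \<and> csum e (xs @ tl ys) = csum e xs + csum e ys
    \<and> ascn e (xs @ tl ys) = ascn e xs + ascn e ys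
    \<and> hd (xs @ tl ys) = hd xs \<and> last (xs @ tl ys) = last ys"
  using assms
proof (induction P R xs rule: pathr.induct)
  case (2 P R x)
  then show ?case by (cases ys) auto
next
  case (3 P R x y zs)
  then show ?case by (cases ys) auto
qed auto

lemma minimal_exists:
  assumes fin: "finite P" and po: "partial_order_on P R" and S: "S \<subseteq> P" "S \<noteq> {}"
  shows "\<exists>m\<in>S. \<forall>t\<in>S. (t, m) \<in> R \<longrightarrow> t = m"
proof -
  have tr: "trans R" and an: "antisym R" and rf: "refl_on P R"
    using po by (auto simp: partial_order_on_def preorder_on_def)
  obtain s where "s \<in> S" using S by auto
  define f where "f m = card {t\<in>P. (t, m) \<in> R}" for m
  obtain m where m: "m \<in> S" "\<forall>y. y \<in> S \<longrightarrow> f m \<le> f y"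
    using ex_has_least_nat[of "\<lambda>x. x \<in> S" s f] \<open>s \<in> S\<close> by auto
  show ?thesis
  proof (intro bexI[OF _ m(1)] ballI impI)
    fix t assume t: "t \<in> S" "(t, m) \<in> R"
    show "t = m"
    proof (rule ccontr)
      assume "t \<noteq> m"
      have "{u\<in>P. (u, t) \<in> R} \<subseteq> {u\<in>P. (u, m) \<in> R}"
        using t tr by (auto dest: transD)
      moreover have "m \<in> {u\<in>P. (u, m) \<in> R}" using m S rf by (auto simp: refl_on_def)
      moreover have "m \<notin> {u\<in>P. (u, t) \<in> R}" using t \<open>t \<noteq> m\<close> an by (auto dest: antisymD)
      ultimately have "{u\<in>P. (u, t) \<in> R} \<subset> {u\<in>P. (u, m) \<in> R}" by blast
      then have "f t < f m" unfolding f_def by (intro psubset_card_mono) (auto simp: fin)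
      with m t show False by force
    qed
  qed
qed


locale fpo =
  fixes P :: "'a set" and R :: "('a \<times> 'a) set"
  assumes fin: "finite P" and po: "partial_order_on P R"
begin

lemma tr: "(x, y) \<in> R \<Longrightarrow> (y, z) \<in> R \<Longrightarrow> (x, z) \<in> R"
  using po by (auto simp: partial_order_on_def preorder_on_def dest: transD)
lemma an: "(x, y) \<in> R \<Longrightarrow> (y, x) \<in> R \<Longrightarrow> x = y"
  using po by (auto simp: partial_order_on_def dest: antisymD)
lemma rf: "x \<in> P \<Longrightarrow> (x, x) \<in> R"
  using po by (auto simp: partial_order_on_def preorder_on_def refl_on_def)

lemma min_below: assumes "x \<in> P" shows "\<exists>m. minel P R m \<and> (m, x) \<in> R"
proof -
  obtain m where m: "m \<in> {m\<in>P. (m, x) \<in> R}" "\<forall>t\<in>{m\<in>P. (m, x) \<in> R}. (t, m) \<in> R \<longrightarrow> t = m"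
    using minimal_exists[OF fin po, of "{m\<in>P. (m, x) \<in> R}"] assms rf by blast
  then show ?thesis unfolding minel_def using tr by blast
qed

lemma max_above: assumes "x \<in> P" shows "\<exists>m. maxel P R m \<and> (x, m) \<in> R"
proof -
  have po': "partial_order_on P (R\<inverse>)" using po by simp
  obtain m where m: "m \<in> {m\<in>P. (x, m) \<in> R}" "\<forall>t\<in>{m\<in>P. (x, m) \<in> R}. (t, m) \<in> R\<inverse> \<longrightarrow> t = m"
    using minimal_exists[OF fin po', of "{m\<in>P. (x, m) \<in> R}"] assms rf by blast
  then show ?thesis unfolding maxel_def using tr by blast
qed

lemma cover_between:
  assumes "y \<in> P" "z \<in> P" "(y, z) \<in> R" "y \<noteq> z"
  shows "\<exists>w. covers P R y w \<and> (w, z) \<in> R"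
proof -
  let ?S = "{w\<in>P. (y, w) \<in> R \<and> w \<noteq> y \<and> (w, z) \<in> R}"
  have "z \<in> ?S" using assms rf by auto
  then obtain w where w: "w \<in> ?S" "\<forall>t\<in>?S. (t, w) \<in> R \<longrightarrow> t = w"
    using minimal_exists[OF fin po, of ?S] by blast
  have "covers P R y w"
    unfolding covers_def
  proof (intro conjI)
    show "\<not> (\<exists>t\<in>P. (y, t) \<in> R \<and> (t, w) \<in> R \<and> t \<noteq> y \<and> t \<noteq> w)"
      using w tr by blast
  qed (use w assms in auto)
  then show ?thesis using w by auto
qed

lemma path_between:
  "y \<in> P \<Longrightarrow> z \<in> P \<Longrightarrow> (y, z) \<in> R \<Longrightarrow> \<exists>xs. pathr P R xs \<and> hd xs = y \<and> last xs = z"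
proof (induction "card {w\<in>P. (y, w) \<in> R}" arbitrary: y rule: less_induct)
  case less
  show ?case
  proof (cases "y = z")
    case True
    then show ?thesis using less by (intro exI[of _ "[y]"]) auto
  next
    case False
    then obtain w where w: "covers P R y w" "(w, z) \<in> R" using cover_between less by blast
    have wP: "w \<in> P" "(y, w) \<in> R" "y \<noteq> w" using w by (auto simp: covers_def)
    have "{u\<in>P. (w, u) \<in> R} \<subset> {u\<in>P. (y, u) \<in> R}"
    proof -
      have "{u\<in>P. (w, u) \<in> R} \<subseteq> {u\<in>P. (y, u) \<in> R}" using wP tr by blast
      moreover have "y \<in> {u\<in>P. (y, u) \<in> R}" using less rf by auto
      moreover have "y \<notin> {u\<in>P. (w, u) \<in> R}" using wP an by blast
      ultimately show ?thesis by blast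
    qed
    then have "card {u\<in>P. (w, u) \<in> R} < card {u\<in>P. (y, u) \<in> R}"
      by (intro psubset_card_mono) (auto simp: fin)
    then obtain xs where xs: "pathr P R xs" "hd xs = w" "last xs = z"
      using less wP w by blast
    then obtain xs' where xs': "xs = w # xs'" by (cases xs) auto
    show ?thesis
      using xs xs' w by (intro exI[of _ "y # xs"]) auto
  qed
qed

lemma path_set: "pathr P R xs \<Longrightarrow> set xs \<subseteq> P"
  by (induction P R xs rule: pathr.induct) (auto simp: covers_def)

lemma path_hd_lt: "pathr P R xs \<Longrightarrow> z \<in> set (tl xs) \<Longrightarrow> (hd xs, z) \<in> R \<and> hd xs \<noteq> z"
proof (induction xs arbitrary: z)
  case (Cons x ys)
  show ?case
  proof (cases ys)
    case (Cons y zs)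
    have c: "covers P R x y" and p: "pathr P R ys" using Cons.prems Cons by auto
    have xy: "(x, y) \<in> R" "x \<noteq> y" using c by (auto simp: covers_def)
    show ?thesis
    proof (cases "z = y")
      case True then show ?thesis using xy by simp
    next
      case False
      then have "z \<in> set (tl ys)" using Cons.prems Cons by auto
      then have "(y, z) \<in> R" "y \<noteq> z" using Cons.IH[OF p] Cons by auto
      then show ?thesis using xy tr an by auto
    qed
  qed (use Cons.prems in auto)
qed auto

lemma path_distinct: "pathr P R xs \<Longrightarrow> distinct xs"
proof (induction xs)
  case (Cons x ys)
  show ?case
  proof (cases ys)
    case (Cons y zs)
    have "pathr P R ys" using Cons.prems Cons by auto
    moreover have "x \<notin> set ys" using path_hd_lt[OF Cons.prems] Cons by auto
    ultimately show ?thesis using Cons.IH by auto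
  qed simp
qed auto

lemma finite_paths: "finite {xs. pathr P R xs}"
proof (rule finite_subset)
  show "{xs. pathr P R xs} \<subseteq> {xs. set xs \<subseteq> P \<and> length xs \<le> card P}"
  proof (rule subsetI)
    fix xs assume "xs \<in> {xs. pathr P R xs}"
    then have p: "pathr P R xs" by simp
    have "set xs \<subseteq> P" using path_set[OF p] .
    have "length xs = card (set xs)" using path_distinct[OF p] by (simp add: distinct_card)
    also have "\<dots> \<le> card P" using path_set[OF p] fin by (intro card_mono)
    finally show "xs \<in> {xs. set xs \<subseteq> P \<and> length xs \<le> card P}" using \<open>set xs \<subseteq> P\<close> by simp
  qed
  show "finite {xs. set xs \<subseteq> P \<and> length xs \<le> card P}" using fin by (rule finite_lists_length_le)
qed


lemma path_ne: "pathr P R C \<Longrightarrow> C \<noteq> []" by auto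

definition Up where "Up x = {xs. pathr P R xs \<and> hd xs = x \<and> maxel P R (last xs)}"
definition Dn where "Dn x = {xs. pathr P R xs \<and> minel P R (hd xs) \<and> last xs = x}"
definition bf where "bf e x = Max (csum e ` Up x)"
definition Af where "Af e x = Max (ascn e ` {C. pathr P R C \<and> last C = x})"

lemma Up_fin: "finite (Up x)"
  unfolding Up_def by (rule finite_subset[OF _ finite_paths]) auto
lemma Dn_fin: "finite (Dn x)"
  unfolding Dn_def by (rule finite_subset[OF _ finite_paths]) auto
lemma Ends_fin: "finite {C. pathr P R C \<and> last C = x}"
  by (rule finite_subset[OF _ finite_paths]) auto

lemma Up_ne: assumes "x \<in> P" shows "Up x \<noteq> {}"
proof -
  obtain m where m: "maxel P R m" "(x, m) \<in> R" using max_above assms by blast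
  then have "m \<in> P" by (simp add: maxel_def)
  then obtain xs where "pathr P R xs" "hd xs = x" "last xs = m"
    using path_between assms m by blast
  then show ?thesis using m unfolding Up_def by auto
qed

lemma Dn_ne: assumes "x \<in> P" shows "Dn x \<noteq> {}"
proof -
  obtain m where m: "minel P R m" "(m, x) \<in> R" using min_below assms by blast
  then have "m \<in> P" by (simp add: minel_def)
  then obtain xs where "pathr P R xs" "hd xs = m" "last xs = x"
    using path_between assms m by blast
  then show ?thesis using m unfolding Dn_def by auto
qed

lemma bf_ge: "D \<in> Up x \<Longrightarrow> csum e D \<le> bf e x"
  unfolding bf_def using Up_fin by (intro Max_ge) auto

lemma bf_att: "x \<in> P \<Longrightarrow> \<exists>D\<in>Up x. bf e x = csum e D"
  unfolding bf_def using Max_in[of "csum e ` Up x"] Up_fin Up_ne by fastforce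

lemma bf_path:
  assumes "pathr P R C" "hd C = x" "last C = y"
  shows "csum e C + bf e y \<le> bf e x"
proof -
  have "y \<in> P" using path_set[OF assms(1)] assms(3) last_in_set[OF path_ne[OF assms(1)]] by blast
  then obtain D where D: "D \<in> Up y" "bf e y = csum e D" using bf_att by blast
  have "pathr P R D" "hd D = y" "maxel P R (last D)" using D by (auto simp: Up_def)
  then have j: "pathr P R (C @ tl D)" "csum e (C @ tl D) = csum e C + csum e D"
     "hd (C @ tl D) = hd C" "last (C @ tl D) = last D"
    using path_app[OF assms(1) \<open>pathr P R D\<close>] assms by auto
  then have "C @ tl D \<in> Up x" using assms \<open>maxel P R (last D)\<close> by (auto simp: Up_def)
  from bf_ge[OF this, of e] j D show ?thesis by simp
qed

lemma Af_ge: "pathr P R C \<Longrightarrow> last C = x \<Longrightarrow> ascn e C \<le> Af e x"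
  unfolding Af_def using Ends_fin by (intro Max_ge) auto

lemma Af_att: "x \<in> P \<Longrightarrow> \<exists>C. pathr P R C \<and> last C = x \<and> Af e x = ascn e C"
proof -
  assume x: "x \<in> P"
  have "[x] \<in> {C. pathr P R C \<and> last C = x}" using x by simp
  then show ?thesis
    unfolding Af_def using Max_in[of "ascn e ` {C. pathr P R C \<and> last C = x}"] Ends_fin by fastforce
qed

lemma Af_nonneg: "x \<in> P \<Longrightarrow> 0 \<le> Af e x"
  using Af_ge[of "[x]" x e] by simp

lemma Af_path:
  assumes "pathr P R C" "hd C = x" "last C = y"
  shows "Af e x + ascn e C \<le> Af e y"
proof -
  have "x \<in> P" using path_set[OF assms(1)] assms(2) hd_in_set[OF path_ne[OF assms(1)]] by blast
  then obtain D where D: "pathr P R D" "last D = x" "Af e x = ascn e D" using Af_att by blast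
  have j: "pathr P R (D @ tl C)" "ascn e (D @ tl C) = ascn e D + ascn e C"
     "last (D @ tl C) = last C"
    using path_app[OF D(1) assms(1)] assms D by auto
  from Af_ge[OF j(1), of y e] j D assms show ?thesis by simp
qed

lemma Af_dn: assumes "x \<in> P" shows "\<exists>C\<in>Dn x. Af e x \<le> ascn e C"
proof -
  obtain D where D: "pathr P R D" "last D = x" "Af e x = ascn e D" using Af_att assms by blast
  have "hd D \<in> P" using path_set[OF D(1)] hd_in_set[OF path_ne[OF D(1)]] by blast
  then obtain C where C: "C \<in> Dn (hd D)" using Dn_ne by blast
  have Cp: "pathr P R C" "minel P R (hd C)" "last C = hd D" using C by (auto simp: Dn_def)
  have j: "pathr P R (C @ tl D)" "ascn e (C @ tl D) = ascn e C + ascn e D"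
     "last (C @ tl D) = last D" "hd (C @ tl D) = hd C"
    using path_app[OF Cp(1) D(1)] Cp by auto
  then have "C @ tl D \<in> Dn x" using Cp D by (auto simp: Dn_def)
  moreover have "Af e x \<le> ascn e (C @ tl D)" using j D ascn_nonneg[of e C] by linarith
  ultimately show ?thesis by blast
qed

lemma join_mc:
  assumes "C \<in> Dn x" "D \<in> Up x"
  shows "maximal_chain P R (C @ tl D) \<and> chain_sum e (C @ tl D) = csum e C + csum e D
     \<and> x \<in> set (C @ tl D)"
proof -
  have C: "pathr P R C" "minel P R (hd C)" "last C = x" using assms by (auto simp: Dn_def)
  have D: "pathr P R D" "maxel P R (last D)" "hd D = x" using assms by (auto simp: Up_def)
  have j: "pathr P R (C @ tl D)" "csum e (C @ tl D) = csum e C + csum e D"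
     "last (C @ tl D) = last D" "hd (C @ tl D) = hd C"
    using path_app[OF C(1) D(1)] C D by auto
  have "x \<in> set C" using C(3) last_in_set[OF path_ne[OF C(1)]] by blast
  then show ?thesis using j C D by (auto simp: maximal_chain_iff chain_sum_csum)
qed

lemma mc_fin: "finite {chain_sum e xs | xs. maximal_chain P R xs}"
proof -
  have "{chain_sum e xs | xs. maximal_chain P R xs} \<subseteq> chain_sum e ` {xs. pathr P R xs}"
    by (auto simp: maximal_chain_iff)
  then show ?thesis using finite_paths finite_subset by blast
qed

lemma r_ge: "maximal_chain P R xs \<Longrightarrow> chain_sum e xs \<le> r_of P R e"
  unfolding r_of_def using mc_fin by (intro Max_ge) auto

end

lemma part_path:
  assumes s: "\<sigma> \<in> PE_partitions P R e n" and e: "\<And>x y. e x y = 1 \<or> e x y = -1"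
  shows "pathr P R C \<Longrightarrow> \<sigma> (last C) + ascn e C \<le> \<sigma> (hd C) + csum e C"
proof (induction C)
  case (Cons x ys)
  show ?case
  proof (cases ys)
    case (Cons y zs)
    have c: "covers P R x y" and p: "pathr P R ys" using Cons.prems Cons by auto
    have "x \<in> P" "y \<in> P" "(x, y) \<in> R" using c by (auto simp: covers_def)
    then have "\<sigma> y \<le> \<sigma> x" "e x y = -1 \<longrightarrow> \<sigma> y < \<sigma> x"
      using s c unfolding PE_partitions_def by auto
    then have "\<sigma> y + (if e x y = 1 then 1 else 0) \<le> \<sigma> x + e x y"
      using e[of x y] by auto
    then show ?thesis using Cons.IH[OF p] Cons by auto
  qed simp
qed simp


lemma PE_val: "\<sigma> \<in> PE_partitions P R e n \<Longrightarrow> x \<in> P \<Longrightarrow> 1 \<le> \<sigma> x \<and> \<sigma> x \<le> n"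
  unfolding PE_partitions_def by (auto simp: PiE_iff)

lemma PE_PiE: "\<sigma> \<in> PE_partitions P R e n \<Longrightarrow> \<sigma> \<in> P \<rightarrow>\<^sub>E {1..n}"
  unfolding PE_partitions_def by blast

context fpo begin

lemma main:
  fixes e :: "'a \<Rightarrow> 'a \<Rightarrow> int" and n :: int
  assumes e: "\<And>x y. e x y = 1 \<or> e x y = -1"
    and nz: "Omega P R e n \<noteq> 0"
    and eq: "Omega P R (\<lambda>x y. - e x y) (n + r_of P R e) = Omega P R e n"
  shows "lambda_chain_condition P R e"
proof (rule ccontr)
  assume nl: "\<not> lambda_chain_condition P R e"
  then obtain x0 where x0: "x0 \<in> P"
    and nx: "\<forall>xs. maximal_chain P R xs \<and> x0 \<in> set xs \<longrightarrow> chain_sum e xs \<noteq> r_of P R e"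
    unfolding lambda_chain_condition_def by blast
  define r where "r = r_of P R e"
  define S where "S = PE_partitions P R e n"
  define T where "T = PE_partitions P R (\<lambda>x y. - e x y) (n + r)"
  define \<Phi> where "\<Phi> \<sigma> = restrict (\<lambda>x. \<sigma> x + bf e x) P" for \<sigma> :: "'a \<Rightarrow> int"
  have Tfin: "finite T"
  proof -
    have "finite (PiE P (\<lambda>_. {1..n+r}))" by (intro finite_PiE fin) simp
    moreover have "T \<subseteq> PiE P (\<lambda>_. {1..n+r})" unfolding T_def PE_partitions_def by blast
    ultimately show ?thesis by (rule finite_subset[rotated])
  qed
  have Sv: "1 \<le> \<sigma> x \<and> \<sigma> x \<le> n" if H: "\<sigma> \<in> S" "x \<in> P" for \<sigma> x
    using PE_val[OF H(1)[unfolded S_def] H(2)] .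
  have Tv: "1 \<le> \<tau> x \<and> \<tau> x \<le> n + r" if H: "\<tau> \<in> T" "x \<in> P" for \<tau> x
    using PE_val[OF H(1)[unfolded T_def] H(2)] .
  have pp: "\<sigma> (last C) + ascn e C \<le> \<sigma> (hd C) + csum e C" if H: "\<sigma> \<in> S" "pathr P R C" for \<sigma> C
    using part_path[OF H(1)[unfolded S_def] e H(2)] .
  have hdP: "hd C \<in> P" and lastP: "last C \<in> P" if H: "pathr P R C" for C
    using path_set[OF H] hd_in_set[OF path_ne[OF H]] last_in_set[OF path_ne[OF H]] by blast+
  have upper: "\<sigma> x + bf e x \<le> n + r" if H: "\<sigma> \<in> S" "x \<in> P" for \<sigma> x
  proof -
    obtain C where C: "C \<in> Dn x" using Dn_ne H(2) by blast
    obtain D where D: "D \<in> Up x" "bf e x = csum e D" using bf_att H(2) by blast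
    have jm: "maximal_chain P R (C @ tl D)" "chain_sum e (C @ tl D) = csum e C + csum e D"
      using join_mc[OF C D(1), of e] by auto
    have j: "csum e C + csum e D \<le> r"
      using r_ge[OF jm(1), of e] jm(2) unfolding r_def by simp
    have Cp: "pathr P R C" "last C = x" using C by (auto simp: Dn_def)
    have "\<sigma> x + ascn e C \<le> \<sigma> (hd C) + csum e C" using pp[OF H(1) Cp(1)] Cp by simp
    moreover have "\<sigma> (hd C) \<le> n" using Sv[OF H(1) hdP[OF Cp(1)]] by simp
    ultimately show ?thesis using j D ascn_nonneg[of e C] by linarith
  qed
  have lower: "1 \<le> \<sigma> x + bf e x" if H: "\<sigma> \<in> S" "x \<in> P" for \<sigma> x
  proof -
    obtain D where D: "D \<in> Up x" "bf e x = csum e D" using bf_att H(2) by blast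
    have Dp: "pathr P R D" "hd D = x" using D by (auto simp: Up_def)
    have "\<sigma> (last D) + ascn e D \<le> \<sigma> x + csum e D" using pp[OF H(1) Dp(1)] Dp by simp
    moreover have "1 \<le> \<sigma> (last D)" using Sv[OF H(1) lastP[OF Dp(1)]] by simp
    ultimately show ?thesis using D ascn_nonneg[of e D] by linarith
  qed
  have ord: "\<sigma> y + bf e y \<le> \<sigma> x + bf e x" if H: "\<sigma> \<in> S" "x \<in> P" "y \<in> P" "(x, y) \<in> R" for \<sigma> x y
  proof -
    obtain C where C: "pathr P R C" "hd C = x" "last C = y" using path_between H by blast
    have "csum e C + bf e y \<le> bf e x" using bf_path[OF C] .
    moreover have "\<sigma> y + ascn e C \<le> \<sigma> x + csum e C" using pp[OF H(1) C(1)] C by simp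
    ultimately show ?thesis using ascn_nonneg[of e C] by linarith
  qed
  have strict: "\<sigma> y + bf e y < \<sigma> x + bf e x" if H: "\<sigma> \<in> S" "covers P R x y" "e x y = 1" for \<sigma> x y
  proof -
    have C: "pathr P R [x, y]" using H(2) by (auto simp: covers_def)
    have bb: "csum e [x, y] + bf e y \<le> bf e x" using bf_path[OF C] by simp
    have xy: "x \<in> P" "y \<in> P" "(x, y) \<in> R" using H(2) by (simp_all add: covers_def)
    have "\<forall>x\<in>P. \<forall>y\<in>P. (x, y) \<in> R \<longrightarrow> \<sigma> y \<le> \<sigma> x" using H(1) unfolding S_def PE_partitions_def by blast
    then have "\<sigma> y \<le> \<sigma> x" using xy by blast
    then show ?thesis using H(3) bb by simp
  qed
  have \<Phi>T: "\<Phi> \<sigma> \<in> T" if H: "\<sigma> \<in> S" for \<sigma>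
  proof -
    have A: "\<Phi> \<sigma> \<in> P \<rightarrow>\<^sub>E {1..n + r}"
      unfolding \<Phi>_def restrict_PiE_iff
    proof
      fix x assume x: "x \<in> P"
      show "\<sigma> x + bf e x \<in> {1..n + r}" using upper[OF H x] lower[OF H x] by simp
    qed
    have B: "\<forall>x\<in>P. \<forall>y\<in>P. (x, y) \<in> R \<longrightarrow> \<Phi> \<sigma> y \<le> \<Phi> \<sigma> x"
    proof (intro ballI impI)
      fix x y assume xy: "x \<in> P" "y \<in> P" "(x, y) \<in> R"
      have "\<Phi> \<sigma> x = \<sigma> x + bf e x" "\<Phi> \<sigma> y = \<sigma> y + bf e y" using xy unfolding \<Phi>_def by simp_all
      then show "\<Phi> \<sigma> y \<le> \<Phi> \<sigma> x" using ord[OF H xy] by simp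
    qed
    have C: "\<forall>x y. covers P R x y \<and> - e x y = -1 \<longrightarrow> \<Phi> \<sigma> y < \<Phi> \<sigma> x"
    proof (intro allI impI)
      fix x y assume a: "covers P R x y \<and> - e x y = -1"
      then have c: "covers P R x y" and e1: "e x y = 1" by simp_all
      have xy: "x \<in> P" "y \<in> P" using c by (simp_all add: covers_def)
      have "\<Phi> \<sigma> x = \<sigma> x + bf e x" "\<Phi> \<sigma> y = \<sigma> y + bf e y" using xy unfolding \<Phi>_def by simp_all
      then show "\<Phi> \<sigma> y < \<Phi> \<sigma> x" using strict[OF H c e1] by simp
    qed
    show ?thesis unfolding T_def PE_partitions_def using A B C by blast
  qed
  have inj: "inj_on \<Phi> S"
  proof (rule inj_onI)
    fix \<sigma>1 \<sigma>2 assume s: "\<sigma>1 \<in> S" "\<sigma>2 \<in> S" "\<Phi> \<sigma>1 = \<Phi> \<sigma>2"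
    have "\<sigma>1 \<in> P \<rightarrow>\<^sub>E {1..n}" "\<sigma>2 \<in> P \<rightarrow>\<^sub>E {1..n}"
      using PE_PiE s(1,2) unfolding S_def by blast+
    then have ex: "\<sigma>1 \<in> extensional P" "\<sigma>2 \<in> extensional P" by (simp_all add: PiE_iff)
    show "\<sigma>1 = \<sigma>2"
    proof (rule extensionalityI[OF ex])
      fix x assume "x \<in> P"
      then show "\<sigma>1 x = \<sigma>2 x" using fun_cong[OF s(3), of x] unfolding \<Phi>_def by simp
    qed
  qed
  have "card (\<Phi> ` S) = card T"
    using card_image[OF inj] eq unfolding Omega_def S_def T_def r_def by simp
  then have img: "\<Phi> ` S = T" using card_subset_eq[OF Tfin] \<Phi>T by blast
  have "S \<noteq> {}"
  proof
    assume "S = {}"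
    then show False using nz unfolding Omega_def S_def by simp
  qed
  then obtain \<sigma>0 where \<sigma>0: "\<sigma>0 \<in> S" by blast
  define \<tau>0 where "\<tau>0 = \<Phi> \<sigma>0"
  have \<tau>0: "\<tau>0 \<in> T" using \<Phi>T[OF \<sigma>0] unfolding \<tau>0_def .
  have sbnd: "\<Phi> \<sigma> x0 \<le> n + r - 1 - Af e x0" if H: "\<sigma> \<in> S" for \<sigma>
  proof -
    obtain C where C: "C \<in> Dn x0" "Af e x0 \<le> ascn e C" using Af_dn x0 by blast
    obtain D where D: "D \<in> Up x0" "bf e x0 = csum e D" using bf_att x0 by blast
    have jm: "maximal_chain P R (C @ tl D)" "chain_sum e (C @ tl D) = csum e C + csum e D"
      "x0 \<in> set (C @ tl D)"
      using join_mc[OF C(1) D(1), of e] by auto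
    have "chain_sum e (C @ tl D) \<le> r" "chain_sum e (C @ tl D) \<noteq> r"
      using r_ge[OF jm(1), of e] nx jm unfolding r_def by auto
    then have j: "csum e C + csum e D \<le> r - 1" using jm(2) by simp
    have Cp: "pathr P R C" "last C = x0" using C by (auto simp: Dn_def)
    have "\<sigma> x0 + ascn e C \<le> \<sigma> (hd C) + csum e C" using pp[OF H Cp(1)] Cp by simp
    moreover have "\<sigma> (hd C) \<le> n" using Sv[OF H hdP[OF Cp(1)]] by simp
    ultimately show ?thesis using j D C x0 unfolding \<Phi>_def by simp
  qed
  define \<tau>' where "\<tau>' = restrict (\<lambda>y. max (\<tau>0 y) (n + r - Af e y)) P"
  have \<tau>0v: "\<tau>0 y \<le> \<tau>0 x" if xy: "x \<in> P" "y \<in> P" "(x, y) \<in> R" for x y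
    using \<tau>0 xy unfolding T_def PE_partitions_def by blast
  have \<tau>0s: "\<tau>0 y < \<tau>0 x" if xy: "covers P R x y" "e x y = 1" for x y
  proof -
    have "\<forall>x y. covers P R x y \<and> - e x y = -1 \<longrightarrow> \<tau>0 y < \<tau>0 x"
      using \<tau>0 unfolding T_def PE_partitions_def by blast
    then show ?thesis using xy by simp
  qed
  have "\<tau>' \<in> T"
  proof -
    have A: "\<tau>' \<in> P \<rightarrow>\<^sub>E {1..n + r}"
      unfolding \<tau>'_def restrict_PiE_iff
    proof
      fix x assume x: "x \<in> P"
      show "max (\<tau>0 x) (n + r - Af e x) \<in> {1..n + r}" using Tv[OF \<tau>0 x] Af_nonneg[OF x, of e] by (simp add: le_max_iff_disj)
    qed
    have B: "\<forall>x\<in>P. \<forall>y\<in>P. (x, y) \<in> R \<longrightarrow> \<tau>' y \<le> \<tau>' x"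
    proof (intro ballI impI)
      fix x y assume xy: "x \<in> P" "y \<in> P" "(x, y) \<in> R"
      obtain C where C: "pathr P R C" "hd C = x" "last C = y" using path_between xy by blast
      have "Af e x + ascn e C \<le> Af e y" using Af_path[OF C] .
      moreover have "\<tau>0 y \<le> \<tau>0 x" using \<tau>0v[OF xy] .
      moreover have "\<tau>' x = max (\<tau>0 x) (n + r - Af e x)" "\<tau>' y = max (\<tau>0 y) (n + r - Af e y)"
        using xy unfolding \<tau>'_def by simp_all
      ultimately show "\<tau>' y \<le> \<tau>' x" using ascn_nonneg[of e C] by linarith
    qed
    have C: "\<forall>x y. covers P R x y \<and> - e x y = -1 \<longrightarrow> \<tau>' y < \<tau>' x"
    proof (intro allI impI)
      fix x y assume a: "covers P R x y \<and> - e x y = -1"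
      then have c: "covers P R x y" and e1: "e x y = 1" by simp_all
      have xy: "x \<in> P" "y \<in> P" using c by (simp_all add: covers_def)
      have Cp: "pathr P R [x, y]" using c xy by simp
      have "Af e x + ascn e [x, y] \<le> Af e y" using Af_path[OF Cp] by simp
      then have "Af e x + 1 \<le> Af e y" using e1 by simp
      moreover have "\<tau>0 y < \<tau>0 x" using \<tau>0s[OF c e1] .
      moreover have "\<tau>' x = max (\<tau>0 x) (n + r - Af e x)" "\<tau>' y = max (\<tau>0 y) (n + r - Af e y)"
        using xy unfolding \<tau>'_def by simp_all
      ultimately show "\<tau>' y < \<tau>' x" by linarith
    qed
    show ?thesis unfolding T_def PE_partitions_def using A B C by blast
  qed
  then obtain \<sigma> where "\<sigma> \<in> S" "\<tau>' = \<Phi> \<sigma>" using img by blast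
  then have "\<tau>' x0 \<le> n + r - 1 - Af e x0" using sbnd by simp
  moreover have "\<tau>' x0 \<ge> n + r - Af e x0" unfolding \<tau>'_def using x0 by simp
  ultimately show False by simp
qed

end

theorem lemma7p2:
  fixes P :: "'a set" and R :: "('a \<times> 'a) set" and \<omega> :: "'a \<Rightarrow> nat" and n :: nat
  assumes "finite P"
    and "partial_order_on P R"
    and "bij_betw \<omega> P {1..card P}"
    and "Omega P R (eps_of \<omega>) (int n) \<noteq> 0"
    and "Omega P R (\<lambda>x y. - eps_of \<omega> x y) (int n + r_of P R (eps_of \<omega>))
         = Omega P R (eps_of \<omega>) (int n)"
  shows "lambda_chain_condition P R (eps_of \<omega>)"
proof -
  interpret fpo P R using assms(1,2) by unfold_locales
  show ?thesis
    by (rule main) (use assms(4,5) in \<open>auto simp: eps_of_def\<close>)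
qed

end
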